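(* Let $g:L_s\to[0,1]$ be a continuous encoding of $[0,1]$ with zero redundancy, and let $x_0\in[0,1]$ be a $g$-unary point with $g$-code $(c_n)$. For $x\neq x_0$ with a $g$-code $(\alpha_n(x))$, let $m=m(x)$ be the index such that $\alpha_m(x)\neq c_m$ and $\alpha_i(x)=c_i$ for all $i<m$. Then $x\to x_0$ if and only if $m\to\infty$; that is, for any sequence $(x_k)$ of points of $[0,1]\setminus\{x_0\}$ (each with a chosen $g$-code), $x_k\to x_0$ if and only if $m(x_k)\to\infty$.
   Context: $A_s=\{0,1,\dots,s-1\}$ ($s\ge2$) and $L_s=A_s\times A_s\times\cdots$ is the space of sequences over $A_s$. An encoding of $[0,1]$ is a surjective map $g:L_s\to[0,1]$; if $g((\alpha_n))=x$, $(\alpha_n)$ is a $g$-code of $x$. The $g$-cylinder of rank $m$ with base $c_1\dots c_m$ is $\Delta^g_{c_1\dots c_m}=\{g((c_1,\dots,c_m,\alpha_1,\alpha_2,\dots)):(\alpha_n)\in L_s\}$. The encoding has zero redundancy if every point has at most two $g$-codes and the set of points with two $g$-codes is at most countable; points with exactly one code are $g$-unary. The encoding is continuous if every $g$-cylinder is an interval and any two distinct cylinders of the same rank have no common interior points. *)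

theory Defs
  imports "HOL-Analysis.Analysis"
begin

text \<open>Sequences over A_s = {0..s-1}, indexed from 0 (alpha 0 is the paper's alpha_1).\<close>
definition seqspace :: "nat \<Rightarrow> (nat \<Rightarrow> nat) set" where
  "seqspace s = {a. \<forall>n. a n < s}"

definition encoding :: "nat \<Rightarrow> ((nat \<Rightarrow> nat) \<Rightarrow> real) \<Rightarrow> bool" where
  "encoding s g \<longleftrightarrow> g ` seqspace s = {0..1}"

definition codes :: "nat \<Rightarrow> ((nat \<Rightarrow> nat) \<Rightarrow> real) \<Rightarrow> real \<Rightarrow> (nat \<Rightarrow> nat) set" where
  "codes s g x = {a \<in> seqspace s. g a = x}"

definition prepend :: "nat list \<Rightarrow> (nat \<Rightarrow> nat) \<Rightarrow> (nat \<Rightarrow> nat)" where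
  "prepend cs a = (\<lambda>n. if n < length cs then cs ! n else a (n - length cs))"

definition cylinder :: "nat \<Rightarrow> ((nat \<Rightarrow> nat) \<Rightarrow> real) \<Rightarrow> nat list \<Rightarrow> real set" where
  "cylinder s g cs = {g (prepend cs a) | a. a \<in> seqspace s}"

definition zero_redundancy :: "nat \<Rightarrow> ((nat \<Rightarrow> nat) \<Rightarrow> real) \<Rightarrow> bool" where
  "zero_redundancy s g \<longleftrightarrow>
     (\<forall>x. finite (codes s g x) \<and> card (codes s g x) \<le> 2) \<and>
     countable {x. card (codes s g x) = 2}"

definition continuous_encoding :: "nat \<Rightarrow> ((nat \<Rightarrow> nat) \<Rightarrow> real) \<Rightarrow> bool" where
  "continuous_encoding s g \<longleftrightarrow>
     (\<forall>cs. set cs \<subseteq> {..<s} \<longrightarrow> is_interval (cylinder s g cs)) \<and>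
     (\<forall>cs ds. set cs \<subseteq> {..<s} \<longrightarrow> set ds \<subseteq> {..<s} \<longrightarrow> length cs = length ds \<longrightarrow> cs \<noteq> ds \<longrightarrow>
        interior (cylinder s g cs) \<inter> interior (cylinder s g ds) = {})"

definition unary :: "nat \<Rightarrow> ((nat \<Rightarrow> nat) \<Rightarrow> real) \<Rightarrow> real \<Rightarrow> bool" where
  "unary s g x \<longleftrightarrow> card (codes s g x) = 1"

text \<open>First index (0-based) where a differs from c.\<close>
definition first_diff :: "(nat \<Rightarrow> nat) \<Rightarrow> (nat \<Rightarrow> nat) \<Rightarrow> nat" where
  "first_diff a c = (LEAST n. a n \<noteq> c n)"

end

theory Submission
  imports Defs
begin

definition pre :: "(nat \<Rightarrow> nat) \<Rightarrow> nat \<Rightarrow> nat list" where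
  "pre b n = map b [0..<n]"

lemma pre_set: "b \<in> seqspace s \<Longrightarrow> set (pre b n) \<subseteq> {..<s}"
  by (auto simp: pre_def seqspace_def)

lemma cyl_mem:
  assumes "a' \<in> seqspace s" "\<forall>i<n. a' i = b i"
  shows "g a' \<in> cylinder s g (pre b n)"
proof -
  have "prepend (pre b n) (\<lambda>i. a' (n+i)) = a'"
    using assms(2) by (auto simp: prepend_def pre_def)
  moreover have "(\<lambda>i. a' (n+i)) \<in> seqspace s" using assms(1) by (auto simp: seqspace_def)
  ultimately show ?thesis unfolding cylinder_def by (metis (mono_tags, lifting) mem_Collect_eq)
qed

lemma cyl_memD:
  assumes "y \<in> cylinder s g (pre b n)" "b \<in> seqspace s"
  shows "\<exists>a'\<in>seqspace s. (\<forall>i<n. a' i = b i) \<and> g a' = y"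
proof -
  obtain a where a: "a \<in> seqspace s" "y = g (prepend (pre b n) a)"
    using assms(1) unfolding cylinder_def by auto
  have "prepend (pre b n) a \<in> seqspace s"
    using a(1) assms(2) by (auto simp: seqspace_def prepend_def pre_def)
  moreover have "\<forall>i<n. prepend (pre b n) a i = b i" by (auto simp: prepend_def pre_def)
  ultimately show ?thesis using a by blast
qed

lemma cyl_mono:
  assumes "y \<in> cylinder s g (pre b n')" "b \<in> seqspace s" "n \<le> n'"
  shows "y \<in> cylinder s g (pre b n)"
  using cyl_memD[OF assms(1,2)] cyl_mem assms(3) by (metis less_le_trans)

lemma all_cyl:
  assumes zr: "zero_redundancy s g" and b: "b \<in> seqspace s"
    and y: "\<forall>n. y \<in> cylinder s g (pre b n)"
  shows "g b = y"
proof (rule ccontr)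
  assume ne: "g b \<noteq> y"
  have fin: "finite (codes s g y)" using zr unfolding zero_redundancy_def by auto
  define N where "N = Max ((\<lambda>a. first_diff a b + 1) ` codes s g y)"
  obtain a' where a': "a' \<in> seqspace s" "\<forall>i<N. a' i = b i" "g a' = y"
    using cyl_memD[OF y[rule_format, of N] b] by blast
  have ac: "a' \<in> codes s g y" using a' by (auto simp: codes_def)
  have "a' \<noteq> b" using a' ne by auto
  then obtain j where "a' j \<noteq> b j" by auto
  then have fd: "a' (first_diff a' b) \<noteq> b (first_diff a' b)"
    unfolding first_diff_def by (rule LeastI)
  have "first_diff a' b + 1 \<le> N" unfolding N_def using fin ac by (intro Max_ge) auto
  then show False using a'(2) fd by auto
qed

lemma ivl: "is_interval (S::real set) \<Longrightarrow> u \<in> S \<Longrightarrow> v \<in> S \<Longrightarrow> u \<le> z \<Longrightarrow> z \<le> v \<Longrightarrow> z \<in> S"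
  unfolding is_interval_1 by blast

lemma shrink:
  assumes zr: "zero_redundancy s g" and ce: "continuous_encoding s g"
    and b: "b \<in> seqspace s" and e: "\<epsilon> > 0"
  shows "\<exists>n. \<forall>y\<in>cylinder s g (pre b n). \<bar>y - g b\<bar> < \<epsilon>"
proof (rule ccontr)
  assume "\<not> ?thesis"
  then have H: "\<forall>n. \<exists>y\<in>cylinder s g (pre b n). \<bar>y - g b\<bar> \<ge> \<epsilon>" by (auto simp: not_less)
  have gb: "g b \<in> cylinder s g (pre b n)" for n using cyl_mem[OF b] by auto
  have iv: "is_interval (cylinder s g (pre b n))" for n
    using ce pre_set[OF b] unfolding continuous_encoding_def by auto
  show False
  proof (cases "\<forall>n. \<exists>y\<in>cylinder s g (pre b n). y \<ge> g b + \<epsilon>")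
    case True
    have "g b + \<epsilon> \<in> cylinder s g (pre b n)" for n
    proof -
      obtain y where "y \<in> cylinder s g (pre b n)" "y \<ge> g b + \<epsilon>" using True by auto
      then show ?thesis using ivl[OF iv[of n] gb[of n]] e by simp
    qed
    then have "g b = g b + \<epsilon>" using all_cyl[OF zr b] by blast
    then show False using e by simp
  next
    case False
    then obtain N where N: "\<forall>y\<in>cylinder s g (pre b N). y < g b + \<epsilon>" by (auto simp: not_le)
    have "g b - \<epsilon> \<in> cylinder s g (pre b n)" for n
    proof -
      obtain y where y: "y \<in> cylinder s g (pre b (max n N))" "\<bar>y - g b\<bar> \<ge> \<epsilon>" using H by blast
      have "y \<in> cylinder s g (pre b N)" by (rule cyl_mono[OF y(1) b]) auto
      then have "y < g b + \<epsilon>" using N by blast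
      then have "y \<le> g b - \<epsilon>" using y(2) by linarith
      moreover have "y \<in> cylinder s g (pre b n)" by (rule cyl_mono[OF y(1) b]) auto
      ultimately show ?thesis using ivl[OF iv[of n] _ gb[of n]] e by simp
    qed
    then have "g b = g b - \<epsilon>" using all_cyl[OF zr b] by blast
    then show False using e by simp
  qed
qed

lemma koenig:
  fixes a :: "nat \<Rightarrow> nat \<Rightarrow> nat"
  assumes K: "infinite K" and a: "\<And>k. a k \<in> seqspace s"
  shows "\<exists>b\<in>seqspace s. \<forall>n. infinite {k\<in>K. \<forall>i<n. a k i = b i}"
proof -
  define ch where "ch T n = (SOME d. d < s \<and> infinite {k\<in>T. a k n = d})" for T n
  define T where "T = rec_nat K (\<lambda>n S. {k\<in>S. a k n = ch S n})"
  have T0: "T 0 = K" and TS: "T (Suc n) = {k\<in>T n. a k n = ch (T n) n}" for n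
    by (simp_all add: T_def)
  have step: "ch S n < s \<and> infinite {k\<in>S. a k n = ch S n}" if "infinite S" for S n
  proof -
    have eq: "S = (\<Union>d\<in>{..<s}. {k\<in>S. a k n = d})"
    proof
      show "S \<subseteq> (\<Union>d\<in>{..<s}. {k\<in>S. a k n = d})"
      proof
        fix k assume "k \<in> S"
        moreover have "a k n < s" using a[of k] unfolding seqspace_def by blast
        ultimately show "k \<in> (\<Union>d\<in>{..<s}. {k\<in>S. a k n = d})" by blast
      qed
    qed blast
    have "\<exists>d\<in>{..<s}. infinite {k\<in>S. a k n = d}"
    proof (rule ccontr)
      assume "\<not> ?thesis"
      then have "finite (\<Union>d\<in>{..<s}. {k\<in>S. a k n = d})" by blast
      then show False using that eq by simp
    qed
    then have "\<exists>d. d < s \<and> infinite {k\<in>S. a k n = d}" by blast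
    then show ?thesis unfolding ch_def by (rule someI_ex)
  qed
  have inf: "infinite (T n)" for n
  proof (induction n)
    case 0 then show ?case using K T0 by simp
  next
    case (Suc n) then show ?case using step[of "T n" n] TS[of n] by simp
  qed
  define b where "b n = ch (T n) n" for n
  have bs: "b \<in> seqspace s" unfolding seqspace_def b_def using step inf by blast
  have sub: "T n \<subseteq> {k\<in>K. \<forall>i<n. a k i = b i}" for n
  proof (induction n)
    case 0 then show ?case using T0 by auto
  next
    case (Suc n)
    show ?case
    proof
      fix k assume "k \<in> T (Suc n)"
      then have "k \<in> T n" "a k n = b n" using TS[of n] by (auto simp: b_def)
      then show "k \<in> {k\<in>K. \<forall>i<Suc n. a k i = b i}" using Suc.IH by (auto simp: less_Suc_eq)
    qed
  qed
  have "infinite {k\<in>K. \<forall>i<n. a k i = b i}" for n using sub[of n] inf[of n] finite_subset by blast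
  then show ?thesis using bs by blast
qed

lemma hh: "(A::real) < D/2 \<Longrightarrow> B < D/2 \<Longrightarrow> D \<le> A + B \<Longrightarrow> False"
  by linarith

theorem lemma1:
  fixes s :: nat and g :: "(nat \<Rightarrow> nat) \<Rightarrow> real" and x0 :: real and c :: "nat \<Rightarrow> nat"
    and x :: "nat \<Rightarrow> real" and a :: "nat \<Rightarrow> nat \<Rightarrow> nat"
  assumes "s \<ge> 2"
    and "encoding s g" and "continuous_encoding s g" and "zero_redundancy s g"
    and "x0 \<in> {0..1}" and "unary s g x0" and "c \<in> codes s g x0"
    and "\<And>k. x k \<noteq> x0" and "\<And>k. a k \<in> codes s g (x k)"
  shows "(x \<longlonglongrightarrow> x0) \<longleftrightarrow> filterlim (\<lambda>k. first_diff (a k) c) at_top sequentially"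
proof
  have cs: "c \<in> seqspace s" and gc: "g c = x0" using assms(7) by (auto simp: codes_def)
  have as: "a k \<in> seqspace s" and ga: "g (a k) = x k" for k using assms(9)[of k] by (auto simp: codes_def)
  have cx: "codes s g x0 = {c}" using assms(6,7) unfolding unary_def
    by (metis card_1_singletonE singletonD)
  have fdl: "a k (first_diff (a k) c) \<noteq> c (first_diff (a k) c)" for k
  proof -
    have "a k \<noteq> c" using ga gc assms(8) by metis
    then obtain j where "a k j \<noteq> c j" by auto
    then show ?thesis unfolding first_diff_def by (rule LeastI)
  qed
  {
    assume lim: "x \<longlonglongrightarrow> x0"
    show "filterlim (\<lambda>k. first_diff (a k) c) at_top sequentially"
    proof (rule ccontr)
      assume "\<not> ?thesis"
      then obtain M where "\<not> eventually (\<lambda>k. first_diff (a k) c \<ge> M) sequentially"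
        unfolding filterlim_at_top by blast
      then have unb: "\<forall>N. \<exists>k\<ge>N. first_diff (a k) c < M"
        unfolding eventually_sequentially by (auto simp: not_le)
      define K where "K = {k. first_diff (a k) c < M}"
      have Kinf: "infinite K" unfolding K_def infinite_nat_iff_unbounded_le using unb by auto
      obtain b where bs: "b \<in> seqspace s" and bi: "\<And>n. infinite {k\<in>K. \<forall>i<n. a k i = b i}"
        using koenig[of K a s] Kinf as by blast
      have "g b = x0"
      proof (rule ccontr)
        assume ne: "g b \<noteq> x0"
        define e where "e = \<bar>g b - x0\<bar> / 2"
        have e: "e > 0" using ne by (simp add: e_def)
        obtain n where n: "\<forall>y\<in>cylinder s g (pre b n). \<bar>y - g b\<bar> < e"
          using shrink[OF assms(4,3) bs e] by blast
        obtain N where N: "\<forall>k\<ge>N. dist (x k) x0 < e" using lim e unfolding lim_sequentially by blast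
        obtain k where k: "k \<ge> N" "k \<in> {k\<in>K. \<forall>i<n. a k i = b i}"
          using bi[of n] infinite_nat_iff_unbounded_le by blast
        have "x k \<in> cylinder s g (pre b n)" using cyl_mem[of "a k" s n b g] as k ga by auto
        then have "\<bar>x k - g b\<bar> < e" using n by auto
        moreover have "\<bar>x k - x0\<bar> < e" using N k by (auto simp: dist_real_def)
        moreover have "\<bar>g b - x0\<bar> \<le> \<bar>g b - x k\<bar> + \<bar>x k - x0\<bar>"
          using abs_triangle_ineq[of "g b - x k" "x k - x0"] by simp
        moreover have "\<bar>g b - x k\<bar> = \<bar>x k - g b\<bar>" by (rule abs_minus_commute)
        ultimately show False unfolding e_def by (metis hh)
      qed
      then have "b \<in> codes s g x0" using bs unfolding codes_def by blast
      then have "b = c" using cx by blast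
      obtain k where k: "k \<in> {k\<in>K. \<forall>i<M. a k i = b i}"
        using not_finite_existsD[OF bi[of M]] by blast
      then have "first_diff (a k) c < M" "\<forall>i<M. a k i = c i" using \<open>b = c\<close> unfolding K_def by auto
      then show False using fdl[of k] by blast
    qed
  }
  {
    assume fl: "filterlim (\<lambda>k. first_diff (a k) c) at_top sequentially"
    show "x \<longlonglongrightarrow> x0"
      unfolding lim_sequentially
    proof (intro allI impI)
      fix r :: real assume r: "r > 0"
      obtain n where n: "\<forall>y\<in>cylinder s g (pre c n). \<bar>y - g c\<bar> < r"
        using shrink[OF assms(4,3) cs r] by blast
      obtain N where N: "\<forall>k\<ge>N. first_diff (a k) c \<ge> n"
        using fl unfolding filterlim_at_top eventually_sequentially by blast
      have "dist (x k) x0 < r" if "k \<ge> N" for k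
      proof -
        have "\<forall>i<n. a k i = c i"
        proof (intro allI impI)
          fix i assume "i < n"
          then have "i < first_diff (a k) c" using N that by force
          then show "a k i = c i" unfolding first_diff_def using not_less_Least by blast
        qed
        then have "x k \<in> cylinder s g (pre c n)" using cyl_mem[of "a k" s n c g] as ga by auto
        then show ?thesis using n gc by (auto simp: dist_real_def)
      qed
      then show "\<exists>no. \<forall>k\<ge>no. dist (x k) x0 < r" by blast
    qed
  }
qed

end
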